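(* Let $u,v$ be two words, and $a$ be a letter. Then, \begin{equation} uav = \sum_{u_1u_2=u}(-1)^{|u_2|}u_1 \sqcup\!\sqcup (a(\overline{u_2} \sqcup\!\sqcup v)). \end{equation}
   Context: Words are over a totally ordered alphabet (e.g. the positive integers), and identities are taken in the free $\mathbb{Z}$-module spanned by words. Here $\sqcup\!\sqcup$ denotes the (ordinary) shuffle product of words, extended bilinearly; juxtaposition denotes concatenation (so $a(w)$ means the letter $a$ concatenated in front of each word of $w$); the sum runs over all factorizations $u=u_1u_2$ of $u$ as a concatenation of two (possibly empty) words; $|u_2|$ is the length of $u_2$; and $\overline{u_2}$ denotes the reversal (mirror image) of the word $u_2$. For example, $1234 = 12\sqcup\!\sqcup 34 - 1\sqcup\!\sqcup 3(2\sqcup\!\sqcup 4)+3(21\sqcup\!\sqcup 4)$. *)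

theory Defs
  imports "HOL-Library.Poly_Mapping"
begin

text \<open>Elements of the free Z-module on words: finitely supported maps
  'a list =>0 int. A word w is the basis element frag_of w.\<close>

definition prepend :: "'a \<Rightarrow> ('a list \<Rightarrow>\<^sub>0 int) \<Rightarrow> ('a list \<Rightarrow>\<^sub>0 int)" where
  "prepend a p = frag_extend (\<lambda>w. frag_of (a # w)) p"

fun shuffle_word :: "'a list \<Rightarrow> 'a list \<Rightarrow> ('a list \<Rightarrow>\<^sub>0 int)" where
  "shuffle_word [] v = frag_of v"
| "shuffle_word u [] = frag_of u"
| "shuffle_word (a # u) (b # v) =
     prepend a (shuffle_word u (b # v)) + prepend b (shuffle_word (a # u) v)"

definition shuffle :: "('a list \<Rightarrow>\<^sub>0 int) \<Rightarrow> ('a list \<Rightarrow>\<^sub>0 int) \<Rightarrow> ('a list \<Rightarrow>\<^sub>0 int)" where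
  "shuffle p q = frag_extend (\<lambda>u. frag_extend (\<lambda>v. shuffle_word u v) q) p"

end

theory Submission
  imports Defs
begin

lemma prepend_0[simp]: "prepend a 0 = 0" by (simp add: prepend_def)
lemma prepend_of[simp]: "prepend a (frag_of w) = frag_of (a # w)" by (simp add: prepend_def)
lemma prepend_add: "prepend a (p + q) = prepend a p + prepend a q" by (simp add: prepend_def frag_extend_add)
lemma prepend_diff: "prepend a (p - q) = prepend a p - prepend a q" by (simp add: prepend_def frag_extend_diff)
lemma prepend_cmul: "prepend a (frag_cmul k p) = frag_cmul k (prepend a p)" by (simp add: prepend_def frag_extend_cmul)
lemma prepend_sum: "finite I \<Longrightarrow> prepend a (\<Sum>i\<in>I. g i) = (\<Sum>i\<in>I. prepend a (g i))"
  by (simp add: prepend_def frag_extend_sum o_def)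

lemma sw_Nil1: "shuffle_word [] = frag_of" by (rule ext) simp
lemma sw_Nil2[simp]: "shuffle_word u [] = frag_of u" by (cases u) auto

lemma ext_Nil[simp]: "frag_extend (shuffle_word []) q = q"
  by (simp add: sw_Nil1 frag_expansion[symmetric])

lemma shuffle_of: "shuffle (frag_of x) q = frag_extend (shuffle_word x) q"
  by (simp add: shuffle_def)

lemma SR: "\<not> (x = [] \<and> y = []) \<Longrightarrow> shuffle_word x y =
   (if x = [] then 0 else prepend (hd x) (shuffle_word (tl x) y)) +
   (if y = [] then 0 else prepend (hd y) (shuffle_word x (tl y)))"
  by (cases x; cases y) auto

lemma L: assumes xne: "x \<noteq> []" shows "frag_extend (shuffle_word x) (prepend c r) =
   prepend (hd x) (frag_extend (shuffle_word (tl x)) (prepend c r)) + prepend c (frag_extend (shuffle_word x) r)"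
  using subset_UNIV
proof (induction r rule: frag_induction)
  case (one w)
  then show ?case using xne by (cases x) auto
next
  case (diff a b)
  then show ?case by (simp add: prepend_diff frag_extend_diff algebra_simps)
qed auto

definition W where "W x y v = frag_extend (shuffle_word x) (shuffle_word y v)"

lemma W_rec: assumes ne: "\<not> (x = [] \<and> y = [] \<and> v = [])" shows "W x y v =
   (if x = [] then 0 else prepend (hd x) (W (tl x) y v)) +
   (if y = [] then 0 else prepend (hd y) (W x (tl y) v)) +
   (if v = [] then 0 else prepend (hd v) (W x y (tl v)))"
proof (cases "y = [] \<and> v = []")
  case True
  then show ?thesis using ne by (cases x) (auto simp: W_def)
next
  case False
  note sr = SR[OF False]
  show ?thesis
  proof (cases "x = []")
    case True
    have "W x y v = shuffle_word y v" using True by (simp add: W_def)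
    also have "\<dots> = (if y = [] then 0 else prepend (hd y) (shuffle_word (tl y) v)) +
       (if v = [] then 0 else prepend (hd v) (shuffle_word y (tl v)))"
      using SR[of y v] False by simp
    finally show ?thesis using True by (simp add: W_def)
  next
    case xne: False
    show ?thesis unfolding W_def sr
      using False xne by (auto simp: frag_extend_add L[OF xne] prepend_add algebra_simps)
  qed
qed

definition Z where "Z u v = (\<Sum>i\<in>{0..length u}. frag_cmul ((-1) ^ (length u - i)) (W (take i u) (rev (drop i u)) v))"

lemma Z_rec: assumes une: "u \<noteq> []" shows "Z u v = prepend (hd u) (Z (tl u) v) - prepend (last u) (Z (butlast u) v)
   + (if v = [] then 0 else prepend (hd v) (Z u (tl v)))"
proof -
  define s where "s i = (-1::int)^(length u - i)" for i
  define T1 where "T1 i = (if take i u = [] then 0 else prepend (hd (take i u)) (W (tl (take i u)) (rev (drop i u)) v))" for i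
  define T2 where "T2 i = (if rev (drop i u) = [] then 0 else prepend (hd (rev (drop i u))) (W (take i u) (tl (rev (drop i u))) v))" for i
  define T3 where "T3 i = (if v = [] then 0 else prepend (hd v) (W (take i u) (rev (drop i u)) (tl v)))" for i
  have ne: "\<not> (take i u = [] \<and> rev (drop i u) = [] \<and> v = [])" for i
    using une by (metis append_take_drop_id rev_is_Nil_conv self_append_conv2)
  have "Z u v = (\<Sum>i\<in>{0..length u}. frag_cmul (s i) (T1 i) + frag_cmul (s i) (T2 i) + frag_cmul (s i) (T3 i))"
    unfolding Z_def s_def
  proof (rule sum.cong[OF refl])
    fix i
    show "frag_cmul ((- 1) ^ (length u - i)) (W (take i u) (rev (drop i u)) v) =
         frag_cmul ((- 1) ^ (length u - i)) (T1 i) + frag_cmul ((- 1) ^ (length u - i)) (T2 i) +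
         frag_cmul ((- 1) ^ (length u - i)) (T3 i)"
      unfolding W_rec[OF ne[of i]] T1_def T2_def T3_def by (simp add: frag_cmul_distrib2)
  qed
  also have "\<dots> = (\<Sum>i\<in>{0..length u}. frag_cmul (s i) (T1 i)) + (\<Sum>i\<in>{0..length u}. frag_cmul (s i) (T2 i))
      + (\<Sum>i\<in>{0..length u}. frag_cmul (s i) (T3 i))"
    by (simp add: sum.distrib)
  also have "(\<Sum>i\<in>{0..length u}. frag_cmul (s i) (T1 i)) = prepend (hd u) (Z (tl u) v)"
  proof -
    obtain b u' where u: "u = b # u'" using une by (cases u) auto
    have "(\<Sum>i\<in>{0..length u}. frag_cmul (s i) (T1 i)) = (\<Sum>i\<in>{0..length u'}. frag_cmul (s (Suc i)) (T1 (Suc i)))"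
    proof -
      have "length u = Suc (length u')" using u by simp
      then show ?thesis by (simp only: sum.atLeast0_atMost_Suc_shift) (simp add: T1_def u)
    qed
    also have "\<dots> = (\<Sum>i\<in>{0..length u'}. prepend b (frag_cmul ((-1) ^ (length u' - i)) (W (take i u') (rev (drop i u')) v)))"
      using u by (simp add: T1_def s_def prepend_cmul)
    also have "\<dots> = prepend (hd u) (Z (tl u) v)"
      using u by (simp add: Z_def prepend_sum)
    finally show ?thesis .
  qed
  also have "(\<Sum>i\<in>{0..length u}. frag_cmul (s i) (T2 i)) = - prepend (last u) (Z (butlast u) v)"
  proof -
    obtain c u0 where u: "u = u0 @ [c]" using une by (cases u rule: rev_exhaust) auto
    have "(\<Sum>i\<in>{0..length u}. frag_cmul (s i) (T2 i)) = (\<Sum>i\<in>{0..length u0}. frag_cmul (s i) (T2 i))"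
      using u by (simp add: T2_def)
    also have "\<dots> = (\<Sum>i\<in>{0..length u0}. - prepend c (frag_cmul ((-1) ^ (length u0 - i)) (W (take i u0) (rev (drop i u0)) v)))"
    proof (rule sum.cong[OF refl])
      fix i assume "i \<in> {0..length u0}"
      then have i: "i \<le> length u0" by simp
      then have "length u - i = Suc (length u0 - i)" using u by simp
      then show "frag_cmul (s i) (T2 i) = - prepend c (frag_cmul ((-1) ^ (length u0 - i)) (W (take i u0) (rev (drop i u0)) v))"
        using u i by (simp add: T2_def s_def prepend_cmul)
    qed
    also have "\<dots> = - prepend (last u) (Z (butlast u) v)"
      using u by (simp add: Z_def prepend_sum sum_negf)
    finally show ?thesis .
  qed
  also have "(\<Sum>i\<in>{0..length u}. frag_cmul (s i) (T3 i)) = (if v = [] then 0 else prepend (hd v) (Z u (tl v)))"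
    by (simp add: T3_def Z_def s_def prepend_sum prepend_cmul)
  finally show ?thesis by simp
qed

lemma Z_zero: "u \<noteq> [] \<Longrightarrow> Z u v = 0"
proof (induction "length u + length v" arbitrary: u v rule: less_induct)
  case less
  have third: "(if v = [] then 0 else prepend (hd v) (Z u (tl v))) = 0"
    using less by (cases v) auto
  show ?case
  proof (cases "length u = 1")
    case True
    then obtain b where "u = [b]" by (cases u) auto
    then show ?thesis using Z_rec[OF less(2), of v] third by simp
  next
    case False
    then have "tl u \<noteq> []" "butlast u \<noteq> []" using less(2) by (cases u; auto)+
    then have "Z (tl u) v = 0" "Z (butlast u) v = 0" using less by (auto intro!: less(1))
    then show ?thesis using Z_rec[OF less(2), of v] third by simp
  qed
qed

theorem mainTheorem7:
  fixes u v :: "'a::linorder list" and a :: 'a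
  shows "frag_of (u @ a # v) =
    (\<Sum>i\<in>{0..length u}.
       frag_cmul ((-1) ^ (length u - i))
         (shuffle (frag_of (take i u))
            (prepend a (shuffle (frag_of (rev (drop i u))) (frag_of v)))))"
proof (induction u)
  case Nil
  then show ?case by (simp add: shuffle_of)
next
  case (Cons b u')
  let ?X = "\<lambda>i. shuffle_word (rev (drop i u')) v"
  define m where "m = length u'"
  have "(\<Sum>i\<in>{0..length (b # u')}.
       frag_cmul ((-1) ^ (length (b # u') - i))
         (shuffle (frag_of (take i (b # u')))
            (prepend a (shuffle (frag_of (rev (drop i (b # u')))) (frag_of v)))))
     = frag_cmul ((-1) ^ Suc m) (prepend a (shuffle_word (rev (b # u')) v)) +
       (\<Sum>i\<in>{0..m}. frag_cmul ((-1) ^ (m - i))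
         (frag_extend (shuffle_word (b # take i u')) (prepend a (?X i))))"
    by (simp only: length_Cons m_def[symmetric] sum.atLeast0_atMost_Suc_shift) (simp add: shuffle_of)
  also have "(\<Sum>i\<in>{0..m}. frag_cmul ((-1) ^ (m - i))
         (frag_extend (shuffle_word (b # take i u')) (prepend a (?X i))))
     = prepend b (\<Sum>i\<in>{0..m}. frag_cmul ((-1) ^ (m - i))
         (frag_extend (shuffle_word (take i u')) (prepend a (?X i))))
       + prepend a (\<Sum>i\<in>{0..m}. frag_cmul ((-1) ^ (m - i)) (W (b # take i u') (rev (drop i u')) v))"
    by (simp add: L prepend_sum prepend_cmul frag_cmul_distrib2 sum.distrib W_def)
  also have "(\<Sum>i\<in>{0..m}. frag_cmul ((-1) ^ (m - i))
         (frag_extend (shuffle_word (take i u')) (prepend a (?X i)))) = frag_of (u' @ a # v)"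
    using Cons by (simp add: m_def shuffle_of)
  finally have eq: "(\<Sum>i\<in>{0..length (b # u')}.
       frag_cmul ((-1) ^ (length (b # u') - i))
         (shuffle (frag_of (take i (b # u')))
            (prepend a (shuffle (frag_of (rev (drop i (b # u')))) (frag_of v)))))
     = frag_of ((b # u') @ a # v) + prepend a (frag_cmul ((-1) ^ Suc m) (W [] (rev (b # u')) v) +
        (\<Sum>i\<in>{0..m}. frag_cmul ((-1) ^ (m - i)) (W (b # take i u') (rev (drop i u')) v)))"
    by (simp add: prepend_add prepend_cmul W_def algebra_simps)
  have "Z (b # u') v = frag_cmul ((-1) ^ Suc m) (W [] (rev (b # u')) v) +
        (\<Sum>i\<in>{0..m}. frag_cmul ((-1) ^ (m - i)) (W (b # take i u') (rev (drop i u')) v))"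
    unfolding Z_def by (simp only: length_Cons m_def[symmetric] sum.atLeast0_atMost_Suc_shift) simp
  then show ?case using eq Z_zero[of "b # u'" v] by simp
qed

end
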